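(* Let $\operatorname{dist}$ be a distance function and let $(X,k,D)$ be a yes-instance of \textsc{$k$-Clustering} with distance $\operatorname{dist}$. Then there exists a solution of $(X,k,D)$ whose clustering is regular.
   Context: \textsc{$k$-Clustering} with distance $\operatorname{dist}$ (a function assigning a nonnegative real to each pair of a vector in $\mathbb{Z}^d$ and a vector in $\mathbb{R}^d$): given a multiset $X$ of $n$ vectors in $\mathbb{Z}^d$, a positive integer $k$ and a nonnegative number $D$, decide whether there is a partition of $X$ into $k$ clusters $C_1,\dots,C_k$ and vectors $c_1,\dots,c_k\in\mathbb{R}^d$ with $\sum_{i=1}^k\sum_{x\in C_i}\operatorname{dist}(x,c_i)\le D$; such clusters and centroids form a solution. An initial cluster of a multiset $X$ is an inclusion-wise maximal sub-multiset $I\subseteq X$ all of whose vectors are equal. A clustering $\{C_1,\dots,C_k\}$ of $X$ is regular if for every initial cluster $I$ there is $i\in\{1,\dots,k\}$ with $I\subseteq C_i$. *)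

theory Defs
  imports "HOL-Analysis.Analysis" "HOL-Library.Multiset"
begin

text \<open>Vectors in Z^d are int ^ 'd, centroids are real ^ 'd (the dimension d is the
  finite index type 'd). A clustering of X into k clusters is a family C 0, ..., C (k-1)
  of sub-multisets whose multiset sum is X (clusters may be empty).\<close>

definition is_clustering :: "'a multiset \<Rightarrow> nat \<Rightarrow> (nat \<Rightarrow> 'a multiset) \<Rightarrow> bool" where
  "is_clustering X k C \<longleftrightarrow> (\<Sum>i<k. C i) = X"

definition clustering_cost ::
  "(int ^ 'd \<Rightarrow> real ^ 'd \<Rightarrow> real) \<Rightarrow> nat \<Rightarrow> (nat \<Rightarrow> (int ^ 'd) multiset) \<Rightarrow> (nat \<Rightarrow> real ^ 'd) \<Rightarrow> real" where
  "clustering_cost dst k C c = (\<Sum>i<k. \<Sum>\<^sub># (image_mset (\<lambda>x. dst x (c i)) (C i)))"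

definition is_solution ::
  "(int ^ 'd \<Rightarrow> real ^ 'd \<Rightarrow> real) \<Rightarrow> (int ^ 'd) multiset \<Rightarrow> nat \<Rightarrow> real
     \<Rightarrow> (nat \<Rightarrow> (int ^ 'd) multiset) \<Rightarrow> (nat \<Rightarrow> real ^ 'd) \<Rightarrow> bool" where
  "is_solution dst X k D C c \<longleftrightarrow> is_clustering X k C \<and> clustering_cost dst k C c \<le> D"

definition yes_instance ::
  "(int ^ 'd \<Rightarrow> real ^ 'd \<Rightarrow> real) \<Rightarrow> (int ^ 'd) multiset \<Rightarrow> nat \<Rightarrow> real \<Rightarrow> bool" where
  "yes_instance dst X k D \<longleftrightarrow> (\<exists>C c. is_solution dst X k D C c)"

definition all_equal :: "'a multiset \<Rightarrow> bool" where
  "all_equal I \<longleftrightarrow> (\<forall>x y. x \<in># I \<longrightarrow> y \<in># I \<longrightarrow> x = y)"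

definition initial_cluster :: "'a multiset \<Rightarrow> 'a multiset \<Rightarrow> bool" where
  "initial_cluster X I \<longleftrightarrow> I \<subseteq># X \<and> all_equal I \<and>
     (\<forall>J. J \<subseteq># X \<and> all_equal J \<and> I \<subseteq># J \<longrightarrow> J = I)"

definition regular_clustering :: "'a multiset \<Rightarrow> nat \<Rightarrow> (nat \<Rightarrow> 'a multiset) \<Rightarrow> bool" where
  "regular_clustering X k C \<longleftrightarrow> (\<forall>I. initial_cluster X I \<longrightarrow> (\<exists>i<k. I \<subseteq># C i))"

end

theory Submission
  imports Defs
begin

lemma sum_image_split:
  "sum_mset (image_mset g (\<Sum>i<(k::nat). C i)) = (\<Sum>i<k. sum_mset (image_mset g (C i)))"
  by (induction k) (auto simp: lessThan_Suc)

lemma filter_partition: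
  assumes "\<forall>x. (j x :: nat) < k"
  shows "(\<Sum>i<k. filter_mset (\<lambda>x. j x = i) X) = X"
proof (rule multiset_eqI)
  fix x
  have "count (\<Sum>i<k. filter_mset (\<lambda>x. j x = i) X) x = (\<Sum>i<k. count (filter_mset (\<lambda>x. j x = i) X) x)"
    by (simp add: count_sum)
  also have "\<dots> = (\<Sum>i<k. if j x = i then count X x else 0)"
    by (intro sum.cong) auto
  also have "\<dots> = count X x" using assms by (simp add: sum.delta)
  finally show "count (\<Sum>i<k. filter_mset (\<lambda>x. j x = i) X) x = count X x" .
qed

theorem proposition1:
  fixes dst :: "int ^ 'd \<Rightarrow> real ^ 'd \<Rightarrow> real"
    and X :: "(int ^ 'd) multiset" and k :: nat and D :: real
  assumes "\<forall>x c. dst x c \<ge> 0"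
    and "k > 0" and "D \<ge> 0"
    and "yes_instance dst X k D"
  shows "\<exists>C c. is_solution dst X k D C c \<and> regular_clustering X k C"
proof -
  obtain C c where sol: "is_solution dst X k D C c" using assms(4) unfolding yes_instance_def by blast
  have ex: "\<exists>i. i < k \<and> (\<forall>l<k. dst x (c i) \<le> dst x (c l))" for x
  proof -
    let ?S = "(\<lambda>i. dst x (c i)) ` {..<k}"
    have fin: "finite ?S" and ne: "?S \<noteq> {}" using assms(2) by auto
    obtain i where "i < k" "dst x (c i) = Min ?S" using Min_in[OF fin ne] by auto
    then show ?thesis using Min_le[OF fin] by auto
  qed
  define j where "j x = (SOME i. i < k \<and> (\<forall>l<k. dst x (c i) \<le> dst x (c l)))" for x
  have j: "j x < k" "\<And>l. l < k \<Longrightarrow> dst x (c (j x)) \<le> dst x (c l)" for x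
    using someI_ex[OF ex[of x]] unfolding j_def by auto
  define F where "F i = filter_mset (\<lambda>x. j x = i) X" for i
  define m where "m x = dst x (c (j x))" for x
  have X: "(\<Sum>i<k. C i) = X" using sol unfolding is_solution_def is_clustering_def by auto
  have FX: "(\<Sum>i<k. F i) = X" unfolding F_def using filter_partition j(1) by blast
  have "clustering_cost dst k F c = (\<Sum>i<k. sum_mset (image_mset m (F i)))"
    unfolding clustering_cost_def
    by (intro sum.cong refl arg_cong[where f=sum_mset] image_mset_cong) (auto simp: F_def m_def)
  also have "\<dots> = sum_mset (image_mset m X)" using sum_image_split[where g=m and k=k and C=F] FX by simp
  also have "\<dots> = (\<Sum>i<k. sum_mset (image_mset m (C i)))" using sum_image_split[where g=m and k=k and C=C] X by simp
  also have "\<dots> \<le> clustering_cost dst k C c"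
    unfolding clustering_cost_def
    by (intro sum_mono sum_mset_mono) (auto simp: m_def j(2))
  also have "\<dots> \<le> D" using sol unfolding is_solution_def by auto
  finally have cost: "clustering_cost dst k F c \<le> D" .
  have reg: "regular_clustering X k F"
    unfolding regular_clustering_def
  proof (intro allI impI)
    fix I assume I: "initial_cluster X I"
    show "\<exists>i<k. I \<subseteq># F i"
    proof (cases "I = {#}")
      case True then show ?thesis using assms(2) by auto
    next
      case False
      then obtain v where v: "v \<in># I" by auto
      have sub: "I \<subseteq># X" and eq: "\<And>y. y \<in># I \<Longrightarrow> y = v"
        using I v unfolding initial_cluster_def all_equal_def by auto
      have "filter_mset (\<lambda>x. j x = j v) I = I" using eq by (auto simp: filter_mset_eq_conv)
      moreover have "filter_mset (\<lambda>x. j x = j v) I \<subseteq># F (j v)"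
        unfolding F_def using sub by (rule multiset_filter_mono)
      ultimately show ?thesis using j(1) by metis
    qed
  qed
  show ?thesis using cost reg FX unfolding is_solution_def is_clustering_def by blast
qed

end
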